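(* Let $T_1\in\mathcal L(\mathcal H_1)$ and $T_2\in\mathcal L(\mathcal H_2)$ be invertible, and let $T\in\mathcal L(\mathcal H_1\oplus\mathcal H_2)$ have the block form $T=\begin{pmatrix}T_1&\ast\\0&T_2\end{pmatrix}$. Then for every $n\geq0$, $$\|T^{-n}\|\leq\max(1,\|T_1^{-n}\|)\cdot\max(1,\|T_2^{-n}\|)\cdot\bigl(\max(2,2\|T^n\|^2+1)\bigr)^{1/2}.$$
   Context: $\ast$ denotes an arbitrary bounded operator from $\mathcal H_2$ to $\mathcal H_1$; under these assumptions $T$ is invertible. *)

theory Defs
  imports "HOL-Analysis.Analysis"
begin

definition blpow :: "('a::real_normed_vector \<Rightarrow>\<^sub>L 'a) \<Rightarrow> nat \<Rightarrow> ('a \<Rightarrow>\<^sub>L 'a)" where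
  "blpow A n = ((\<lambda>B. A o\<^sub>L B) ^^ n) id_blinfun"

end

theory Submission
  imports Defs
begin

lemma blpow_apply: "blinfun_apply (blpow A n) = (blinfun_apply A ^^ n)"
  by (induction n) (auto simp: blpow_def)

lemma funpow_inv:
  fixes f g :: "'a \<Rightarrow> 'a"
  assumes "\<And>x. g (f x) = x"
  shows "(g ^^ n) ((f ^^ n) x) = x"
proof (induction n arbitrary: x)
  case 0 show ?case by simp
next
  case (Suc n)
  have "(g ^^ Suc n) ((f ^^ Suc n) x) = (g ^^ n) (g (f ((f ^^ n) x)))"
    by (metis comp_apply funpow.simps(2) funpow_Suc_right)
  then show ?case using assms Suc by simp
qed

lemma real_ineq:
  fixes a b p u v ma mb K :: real
  assumes "0 \<le> a" "0 \<le> b" "0 \<le> p" "0 \<le> u" "0 \<le> v"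
    "a \<le> ma" "b \<le> mb" "1 \<le> ma" "1 \<le> mb" "2 \<le> K" "2*p^2+1 \<le> K"
  shows "(a * u + a * (p * (b * v)))^2 + (b * v)^2 \<le> (ma*mb)^2 * K * (u^2+v^2)"
proof -
  have h1: "(a * u + a * (p * (b * v)))^2 \<le> 2*a^2*u^2 + 2*a^2*p^2*b^2* v^2"
  proof -
    have "0 \<le> (a * u - a * (p * (b * v)))^2" by simp
    then show ?thesis by (simp add: power2_eq_square algebra_simps)
  qed
  have a2: "a^2 \<le> ma^2" using assms by (simp add: power_mono)
  have b2: "b^2 \<le> mb^2" using assms by (simp add: power_mono)
  have ma1: "1 \<le> ma^2" using assms by (simp add: one_le_power)
  have mb1: "1 \<le> mb^2" using assms by (simp add: one_le_power)
  have M: "a^2 \<le> (ma*mb)^2" "b^2 \<le> (ma*mb)^2" "a^2*b^2 \<le> (ma*mb)^2"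
    using a2 b2 ma1 mb1
    by (auto simp: power_mult_distrib intro: order_trans[OF _ mult_mono[of 1 _ _ _]]
          order_trans[OF _ mult_mono[of _ _ 1]] mult_mono)
  have "2*a^2*u^2 \<le> (ma*mb)^2 * K * u^2"
  proof -
    have "2*a^2 \<le> (ma*mb)^2*K"
      using M(1) assms mult_mono[of "a^2" "(ma*mb)^2" 2 K] by simp
    then show ?thesis by (simp add: mult_right_mono)
  qed
  moreover have "2*a^2*p^2*b^2* v^2 + (b * v)^2 \<le> (ma*mb)^2 * K * v^2"
  proof -
    have "2*p^2*(a^2*b^2) + b^2 \<le> 2*p^2*(ma*mb)^2 + (ma*mb)^2"
      using M by (intro add_mono mult_left_mono) auto
    also have "\<dots> = (ma*mb)^2 * (2*p^2+1)" by (simp add: algebra_simps)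
    also have "\<dots> \<le> (ma*mb)^2 * K" using assms by (intro mult_left_mono) auto
    finally have "2*p^2*(a^2*b^2) + b^2 \<le> (ma*mb)^2 * K" .
    then have "(2*p^2*(a^2*b^2) + b^2)* v^2 \<le> (ma*mb)^2 * K * v^2"
      by (simp add: mult_right_mono)
    then show ?thesis by (simp add: algebra_simps power_mult_distrib)
  qed
  ultimately show ?thesis using h1 by (simp add: algebra_simps)
qed

theorem lemma7p9:
  fixes T1 T1i :: "'a::{real_inner, complete_space} \<Rightarrow>\<^sub>L 'a"
    and T2 T2i :: "'b::{real_inner, complete_space} \<Rightarrow>\<^sub>L 'b"
    and S :: "'b \<Rightarrow>\<^sub>L 'a"
    and T :: "('a \<times> 'b) \<Rightarrow>\<^sub>L ('a \<times> 'b)"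
  assumes T1_inv: "T1 o\<^sub>L T1i = id_blinfun" "T1i o\<^sub>L T1 = id_blinfun"
    and T2_inv: "T2 o\<^sub>L T2i = id_blinfun" "T2i o\<^sub>L T2 = id_blinfun"
    and T_block: "\<And>x y. blinfun_apply T (x, y) = (blinfun_apply T1 x + blinfun_apply S y, blinfun_apply T2 y)"
  shows "\<exists>Ti :: ('a \<times> 'b) \<Rightarrow>\<^sub>L ('a \<times> 'b).
           T o\<^sub>L Ti = id_blinfun \<and> Ti o\<^sub>L T = id_blinfun \<and>
           (\<forall>n::nat. norm (blpow Ti n)
              \<le> max 1 (norm (blpow T1i n)) * max 1 (norm (blpow T2i n))
                 * sqrt (max 2 (2 * (norm (blpow T n))^2 + 1)))"
proof -
  have i1: "\<And>x. T1 (T1i x) = x" "\<And>x. T1i (T1 x) = x"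
    using T1_inv by (metis blinfun_apply_blinfun_compose blinfun_apply_id_blinfun)+
  have i2: "\<And>x. T2 (T2i x) = x" "\<And>x. T2i (T2 x) = x"
    using T2_inv by (metis blinfun_apply_blinfun_compose blinfun_apply_id_blinfun)+
  define f where "f = (\<lambda>p::'a\<times>'b. (T1i (fst p) - T1i (S (T2i (snd p))), T2i (snd p)))"
  have bl: "bounded_linear f"
    unfolding f_def
    by (intro bounded_linear_Pair bounded_linear_sub
        bounded_linear_compose[OF blinfun.bounded_linear_right]
        bounded_linear_fst bounded_linear_snd)
  define Ti where "Ti = Blinfun f"
  have Ti_apply: "\<And>x y. Ti (x, y) = (T1i x - T1i (S (T2i y)), T2i y)"
    unfolding Ti_def using bl by (simp add: bounded_linear_Blinfun_apply f_def)
  have inv1: "T o\<^sub>L Ti = id_blinfun"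
    by (rule blinfun_eqI) (auto simp: Ti_apply T_block i1 i2 blinfun.diff_right)
  have inv2: "Ti o\<^sub>L T = id_blinfun"
    by (rule blinfun_eqI) (auto simp: Ti_apply T_block i1 i2 blinfun.add_right)
  have Tinv: "\<And>z. T (Ti z) = z" "\<And>z. Ti (T z) = z"
    using inv1 inv2 by (metis blinfun_apply_blinfun_compose blinfun_apply_id_blinfun)+
  show ?thesis
  proof (intro exI conjI allI)
    fix n :: nat
    define P where "P = blinfun_apply T ^^ n"
    define Q where "Q = blinfun_apply Ti ^^ n"
    define A where "A = blinfun_apply T1i ^^ n"
    define B where "B = blinfun_apply T2i ^^ n"
    define A' where "A' = blinfun_apply T1 ^^ n"
    have QP: "\<And>z. P (Q z) = z"
      unfolding P_def Q_def by (rule funpow_inv) (rule Tinv(1))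
    have AA': "\<And>x. A (A' x) = x"
      unfolding A_def A'_def by (rule funpow_inv) (rule i1(2))
    have Pfst: "\<And>x. P (x, 0) = (A' x, 0)"
    proof -
      have "\<And>x. (blinfun_apply T ^^ m) (x, 0) = ((blinfun_apply T1 ^^ m) x, 0)" for m
        by (induction m) (auto simp: T_block)
      then show "\<And>x. P (x, 0) = (A' x, 0)" unfolding P_def A'_def by simp
    qed
    have Qsnd: "\<And>x y. snd (Q (x, y)) = B y"
    proof -
      have "\<And>x y. snd ((blinfun_apply Ti ^^ m) (x, y)) = (blinfun_apply T2i ^^ m) y" for m
      proof (induction m)
        case 0 then show ?case by simp
      next
        case (Suc m)
        fix x y
        show "snd ((blinfun_apply Ti ^^ Suc m) (x, y)) = (blinfun_apply T2i ^^ Suc m) y"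
          using Suc[of x y] by (cases "(blinfun_apply Ti ^^ m) (x, y)") (simp add: Ti_apply)
      qed
      then show "\<And>x y. snd (Q (x, y)) = B y" unfolding Q_def B_def by simp
    qed
    have Qfst: "\<And>x. Q (x, 0) = (A x, 0)"
    proof -
      have "\<And>x. (blinfun_apply Ti ^^ m) (x, 0) = ((blinfun_apply T1i ^^ m) x, 0)" for m
        by (induction m) (auto simp: Ti_apply)
      then show "\<And>x. Q (x, 0) = (A x, 0)" unfolding Q_def A_def by simp
    qed
    have Qapp: "Q = blinfun_apply (blpow Ti n)" unfolding Q_def by (simp add: blpow_apply)
    have Papp: "P = blinfun_apply (blpow T n)" unfolding P_def by (simp add: blpow_apply)
    have Aapp: "A = blinfun_apply (blpow T1i n)" unfolding A_def by (simp add: blpow_apply)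
    have Bapp: "B = blinfun_apply (blpow T2i n)" unfolding B_def by (simp add: blpow_apply)
    define a where "a = norm (blpow T1i n)"
    define b where "b = norm (blpow T2i n)"
    define p where "p = norm (blpow T n)"
    define K where "K = max 2 (2 * p^2 + 1)"
    define ma where "ma = max 1 a"
    define mb where "mb = max 1 b"
    have form: "Q (x, y) = (A x - A (fst (P (0, B y))), B y)" for x y
    proof -
      obtain r where r: "Q (0, y) = (r, B y)" using Qsnd[of 0 y] by (metis prod.collapse)
      have "(0, y) = P (r, B y)" using QP[of "(0,y)"] r by simp
      also have "P (r, B y) = P (r, 0) + P (0, B y)"
        unfolding Papp by (metis add.right_neutral add_0 add_Pair blinfun.add_right)
      finally have e: "(0, y) = (A' r, 0) + P (0, B y)" using Pfst by simp
      have "fst (0::'a, y) = fst ((A' r, 0) + P (0, B y))" using e by (rule arg_cong)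
      then have "0 = A' r + fst (P (0, B y))" by (simp only: fst_add fst_conv)
      then have "A' r = - fst (P (0, B y))" by (simp add: eq_neg_iff_add_eq_0 add.commute)
      then have "r = - A (fst (P (0, B y)))"
        using AA'[of r] unfolding Aapp by (metis blinfun.minus_right)
      have "Q (x, y) = Q (x, 0) + Q (0, y)"
        unfolding Qapp by (metis add.right_neutral add_0 add_Pair blinfun.add_right)
      then show ?thesis using r Qfst \<open>r = _\<close> by simp
    qed
    have bound: "norm (Q z) \<le> ma * mb * sqrt K * norm z" for z
    proof -
      obtain x y where z: "z = (x, y)" by fastforce
      define w where "w = fst (P (0, B y))"
      have nw: "norm w \<le> p * (b * norm y)"
      proof -
        have "norm w \<le> norm (P (0, B y))" unfolding w_def
          by (metis norm_fst_le prod.collapse)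
        also have "\<dots> \<le> p * norm (0::'a, B y)" unfolding Papp p_def by (rule norm_blinfun)
        also have "norm (0::'a, B y) = norm (B y)" by (simp add: norm_Pair)
        also have "p * norm (B y) \<le> p * (b * norm y)"
          unfolding p_def b_def Bapp by (intro mult_left_mono norm_blinfun) auto
        finally show ?thesis .
      qed
      have n1: "norm (A x - A w) \<le> a * norm x + a * (p * (b * norm y))"
      proof -
        have "norm (A x - A w) \<le> norm (A x) + norm (A w)" by (rule norm_triangle_ineq4)
        also have "\<dots> \<le> a * norm x + a * norm w"
          unfolding a_def Aapp by (intro add_mono norm_blinfun)
        also have "\<dots> \<le> a * norm x + a * (p * (b * norm y))"
          using nw unfolding a_def by (intro add_left_mono mult_left_mono) auto
        finally show ?thesis .
      qed
      have n2: "norm (B y) \<le> b * norm y" unfolding b_def Bapp by (rule norm_blinfun)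
      have "(norm (Q z))^2 = (norm (A x - A w))^2 + (norm (B y))^2"
        using form[of x y] z w_def by (simp add: norm_Pair)
      also have "\<dots> \<le> (a * norm x + a * (p * (b * norm y)))^2 + (b * norm y)^2"
        using n1 n2 by (intro add_mono power_mono) auto
      also have "\<dots> \<le> (ma*mb)^2 * K * ((norm x)^2 + (norm y)^2)"
        by (rule real_ineq) (auto simp: a_def b_def p_def ma_def mb_def K_def)
      also have "\<dots> = (ma * mb * sqrt K * norm z)^2"
        using z by (simp add: norm_Pair power_mult_distrib K_def)
      finally have "(norm (Q z))^2 \<le> (ma * mb * sqrt K * norm z)^2" .
      moreover have "0 \<le> ma * mb * sqrt K * norm z" by (simp add: ma_def mb_def K_def)
      ultimately show ?thesis using power2_le_imp_le by blast
    qed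
    have "norm (blpow Ti n) \<le> ma * mb * sqrt K"
      proof (rule norm_blinfun_bound)
      show "0 \<le> ma * mb * sqrt K" by (simp add: ma_def mb_def K_def)
      show "norm (blpow Ti n z) \<le> ma * mb * sqrt K * norm z" for z
        using bound[of z] by (simp only: Qapp)
    qed
    then show "norm (blpow Ti n) \<le> max 1 (norm (blpow T1i n)) * max 1 (norm (blpow T2i n))
                 * sqrt (max 2 (2 * (norm (blpow T n))^2 + 1))"
      by (simp add: ma_def mb_def K_def a_def b_def p_def)
  qed (fact inv1, fact inv2)
qed

end
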